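(* Let $\vec v\in\mathcal{S}^{n-1}$ and let $f\in\mathcal{L}^{1}(\mathbb{R}^{n})$ satisfy $t_{\min}:=\inf_{\vec x\in\mathrm{supp}\,f}\vec x\cdot\vec v>-\infty$. Then the distributional directional antiderivative $\mathcal{I}_{\vec v}f$ is the function given by \[ \mathcal{I}_{\vec v}f(\vec u+s\vec v)=\int_{-\infty}^{s}f(\vec u+t\vec v)\,dt,\qquad \vec u\in\vec v^{\perp},\ s\in\mathbb{R}, \] i.e. $\langle \mathcal{I}_{\vec v}f,\phi\rangle=\int_{\vec v^\perp}\int_{\mathbb{R}}\Big(\int_{-\infty}^{s}f(\vec u+t\vec v)\,dt\Big)\phi(\vec u+s\vec v)\,ds\,d\vec u$ for all $\phi\in\mathscr{S}(\mathbb{R}^n)$.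
   Context: For $\vec v\in\mathcal{S}^{n-1}$ and $\phi\in\mathscr{S}(\mathbb{R}^n)$, the x-ray transform in direction $\vec v$ is $\mathcal{X}_{\vec v}\phi(\vec u)=\int_{\mathbb{R}}\phi(\vec u+s\vec v)\,ds$ for $\vec u\in\vec v^\perp$. For a distribution $w$ with $t_{\min}=\inf_{\vec x\in\mathrm{supp}\,w}\vec x\cdot\vec v>-\infty$, choose $\psi_0\in\mathcal{C}_0^\infty(\mathbb{R})$ with $\int_{\mathbb{R}}\psi_0=1$ and $\mathrm{supp}\,\psi_0\subseteq(-\infty,t_{\min})$, and set \[ \mathcal{I}_{\vec v}\phi(\vec u+t\vec v)=\int_{-\infty}^{t}\big(\phi(\vec u+s\vec v)-\mathcal{X}_{\vec v}\phi(\vec u)\psi_0(s)\big)\,ds,\quad \vec u\in\vec v^\perp,\ t\in\mathbb{R}. \] The distributional directional antiderivative is defined by $\langle\mathcal{I}_{\vec v}w,\phi\rangle=-\langle w,\mathcal{I}_{\vec v}\phi\rangle$ for $\phi\in\mathscr{S}(\mathbb{R}^n)$; this does not depend on the choice of $\psi_0$. Here the support of $f\in\mathcal{L}^1$ is its essential support. *)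

theory Defs
  imports "HOL-Analysis.Analysis"
begin

fun dirderivs :: "'a::real_normed_vector list \<Rightarrow> ('a \<Rightarrow> 'b::real_normed_vector) \<Rightarrow> 'a \<Rightarrow> 'b" where
  "dirderivs [] g = g"
| "dirderivs (e # es) g = (\<lambda>x. frechet_derivative (dirderivs es g) (at x) e)"

definition smooth_fun :: "('a::real_normed_vector \<Rightarrow> 'b::real_normed_vector) \<Rightarrow> bool" where
  "smooth_fun g \<longleftrightarrow> (\<forall>ds x. dirderivs ds g differentiable (at x))"

definition schwartz :: "('a::euclidean_space \<Rightarrow> complex) \<Rightarrow> bool" where
  "schwartz \<phi> \<longleftrightarrow> smooth_fun \<phi> \<and>
     (\<forall>ds (k::nat). bounded ((\<lambda>x. (1 + norm x) ^ k * norm (dirderivs ds \<phi> x)) ` UNIV))"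

definition esssupp :: "('a::euclidean_space \<Rightarrow> complex) \<Rightarrow> 'a set" where
  "esssupp f = - \<Union>{U. open U \<and> (AE x in lborel. x \<in> U \<longrightarrow> f x = 0)}"

definition tmin :: "'a::euclidean_space \<Rightarrow> ('a \<Rightarrow> complex) \<Rightarrow> ereal" where
  "tmin v f = Inf ((\<lambda>x. ereal (x \<bullet> v)) ` esssupp f)"

text \<open>x-ray transform in direction v (evaluated at u, meant for u in the orthogonal complement of v).\<close>
definition xray :: "'a::euclidean_space \<Rightarrow> ('a \<Rightarrow> complex) \<Rightarrow> 'a \<Rightarrow> complex" where
  "xray v \<phi> u = (LINT s|lborel. \<phi> (u + s *\<^sub>R v))"

text \<open>Decomposition x = u + t v with u = x - (x.v) v in the orthogonal complement and t = x.v.\<close>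
definition perp_part :: "'a::euclidean_space \<Rightarrow> 'a \<Rightarrow> 'a" where
  "perp_part v x = x - (x \<bullet> v) *\<^sub>R v"

definition antideriv_test ::
  "'a::euclidean_space \<Rightarrow> (real \<Rightarrow> complex) \<Rightarrow> ('a \<Rightarrow> complex) \<Rightarrow> 'a \<Rightarrow> complex" where
  "antideriv_test v \<psi>0 \<phi> x =
     (LINT s:{..x \<bullet> v}|lborel. \<phi> (perp_part v x + s *\<^sub>R v) - xray v \<phi> (perp_part v x) * \<psi>0 s)"

definition admissible_cutoff :: "'a::euclidean_space \<Rightarrow> ('a \<Rightarrow> complex) \<Rightarrow> (real \<Rightarrow> complex) \<Rightarrow> bool" where
  "admissible_cutoff v f \<psi>0 \<longleftrightarrow> smooth_fun \<psi>0 \<and> bounded {s. \<psi>0 s \<noteq> 0} \<and>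
     (LINT s|lborel. \<psi>0 s) = 1 \<and>
     closure {s. \<psi>0 s \<noteq> 0} \<subseteq> {s. ereal s < tmin v f}"

definition fun_pairing :: "('a::euclidean_space \<Rightarrow> complex) \<Rightarrow> ('a \<Rightarrow> complex) \<Rightarrow> complex" where
  "fun_pairing f \<phi> = (LINT x|lborel. f x * \<phi> x)"

definition dist_antideriv ::
  "'a::euclidean_space \<Rightarrow> (real \<Rightarrow> complex) \<Rightarrow> (('a \<Rightarrow> complex) \<Rightarrow> complex) \<Rightarrow> ('a \<Rightarrow> complex) \<Rightarrow> complex" where
  "dist_antideriv v \<psi>0 w \<phi> = - w (antideriv_test v \<psi>0 \<phi>)"

definition pointwise_antideriv :: "'a::euclidean_space \<Rightarrow> ('a \<Rightarrow> complex) \<Rightarrow> 'a \<Rightarrow> complex" where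
  "pointwise_antideriv v f x = (LINT t:{..x \<bullet> v}|lborel. f (perp_part v x + t *\<^sub>R v))"

end

theory Submission
  imports Defs "HOL-Real_Asymp.Real_Asymp"
begin


lemma schwartz_cont:
  assumes "schwartz \<phi>" shows "continuous_on UNIV \<phi>"
proof -
  have "\<And>x. \<phi> differentiable (at x)"
    using assms unfolding schwartz_def smooth_fun_def by (metis dirderivs.simps(1))
  then show ?thesis by (meson continuous_at_imp_continuous_on differentiable_imp_continuous_within)
qed

lemma schwartz_bound:
  assumes "schwartz \<phi>" obtains B where "B \<ge> 0" "\<And>x. norm (\<phi> x) \<le> B / (1 + norm x)^2"
proof -
  have "bounded ((\<lambda>x. (1 + norm x) ^ 2 * norm (dirderivs [] \<phi> x)) ` UNIV)"
    using assms unfolding schwartz_def by blast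
  then obtain B where B: "\<And>x. norm ((1 + norm x) ^ 2 * norm (\<phi> x)) \<le> B"
    unfolding bounded_iff by auto
  have "B \<ge> 0" using B[of 0] by (smt (verit) norm_ge_zero)
  moreover have "norm (\<phi> x) \<le> B / (1 + norm x)^2" for x
  proof -
    have p: "(1 + norm x)^2 > 0" by (smt (verit) norm_ge_zero zero_less_power)
    have "(1 + norm x) ^ 2 * norm (\<phi> x) \<le> B" using B[of x] by simp
    then show ?thesis using p by (simp add: field_simps)
  qed
  ultimately show ?thesis using that by blast
qed

definition gg :: "real \<Rightarrow> real" where "gg r = 1 / (1 + \<bar>r\<bar>)^2"

lemma gg_half: "(\<integral>\<^sup>+x. ennreal (1 / (1 + x)^2) * indicator {0 ..} x \<partial>lborel) = 1"
proof -
  have "(\<integral>\<^sup>+x. ennreal (1 / (1 + x)^2) * indicator {0 ..} x \<partial>lborel) = ennreal ((0::real) - (- 1 / (1 + 0)))"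
  proof (rule nn_integral_FTC_atLeast)
    show "(\<lambda>x::real. 1 / (1 + x)^2) \<in> borel_measurable borel" by (intro borel_measurable_divide borel_measurable_power borel_measurable_add) auto
    show "DERIV (\<lambda>x. - 1 / (1 + x)) x :> 1 / (1 + x)^2" if "0 \<le> x" for x::real
      using that by (auto intro!: derivative_eq_intros simp: power2_eq_square field_simps)
    show "0 \<le> 1 / (1 + x)^2" for x :: real by simp
    show "((\<lambda>x::real. - 1 / (1 + x)) \<longlongrightarrow> 0) at_top" by real_asymp
  qed
  then show ?thesis by simp
qed


lemma gg_meas[measurable]: "gg \<in> borel_measurable borel"
  unfolding gg_def by (intro borel_measurable_divide borel_measurable_power borel_measurable_add) auto

lemma gg_nonneg: "gg r \<ge> 0" by (simp add: gg_def)

lemma gg_integrable: "integrable lborel gg"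
proof (rule integrableI_bounded)
  show "gg \<in> borel_measurable lborel" by simp
  let ?h = "\<lambda>x::real. ennreal (1 / (1 + x)^2) * indicator {0 ..} x"
  have h_meas: "?h \<in> borel_measurable borel"
    by (intro borel_measurable_times_ennreal) (auto intro!: borel_measurable_divide borel_measurable_power borel_measurable_add)
  have le: "ennreal (norm (gg x)) \<le> ?h x + ?h (0 + (-1) * x)" for x
  proof (cases "x \<ge> 0")
    case True
    then have "ennreal (norm (gg x)) = ?h x" by (simp add: gg_def)
    then show ?thesis by (simp add: add_increasing2)
  next
    case False
    then have "ennreal (norm (gg x)) = ?h (0 + (-1) * x)" by (simp add: gg_def indicator_def)
    then show ?thesis by (simp add: add_increasing)
  qed
  have "(\<integral>\<^sup>+x. ennreal (norm (gg x)) \<partial>lborel) \<le> (\<integral>\<^sup>+x. ?h x + ?h (0 + (-1) * x) \<partial>lborel)"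
    by (intro nn_integral_mono le)
  also have "\<dots> = (\<integral>\<^sup>+x. ?h x \<partial>lborel) + (\<integral>\<^sup>+x. ?h (0 + (-1) * x) \<partial>lborel)"
    using h_meas by (intro nn_integral_add) auto
  also have "(\<integral>\<^sup>+x. ?h (0 + (-1) * x) \<partial>lborel) = (\<integral>\<^sup>+x. ?h x \<partial>lborel)"
    using nn_integral_real_affine[OF h_meas, of "-1" 0] by simp
  also have "(\<integral>\<^sup>+x. ?h x \<partial>lborel) = 1" by (rule gg_half)
  finally have "(\<integral>\<^sup>+x. ennreal (norm (gg x)) \<partial>lborel) \<le> 1 + 1" .
  then show "(\<integral>\<^sup>+x. ennreal (norm (gg x)) \<partial>lborel) < \<infinity>"
    using order_le_less_trans by fastforce
qed

lemma gg_shift_integrable: "integrable lborel (\<lambda>r. gg (a + r))"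
  using lborel_integrable_real_affine[OF gg_integrable, of 1 a] by simp

lemma gg_shift_integral: "(\<integral>r. gg (a + r) \<partial>lborel) = (\<integral>r. gg r \<partial>lborel)"
  using lborel_integral_real_affine[of 1 gg a] by simp

lemma line_bound:
  fixes \<phi> :: "'a::euclidean_space \<Rightarrow> complex"
  assumes "norm v = 1" "B \<ge> 0" "\<And>x. norm (\<phi> x) \<le> B / (1 + norm x)^2"
  shows "norm (\<phi> (x + r *\<^sub>R v)) \<le> B * gg (x \<bullet> v + r)"
proof -
  have "\<bar>(x + r *\<^sub>R v) \<bullet> v\<bar> \<le> norm (x + r *\<^sub>R v)"
    using Cauchy_Schwarz_ineq2[of "x + r *\<^sub>R v" v] assms(1) by simp
  moreover have "(x + r *\<^sub>R v) \<bullet> v = x \<bullet> v + r"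
    using assms(1) by (simp add: inner_add_left dot_square_norm)
  ultimately have "\<bar>x \<bullet> v + r\<bar> \<le> norm (x + r *\<^sub>R v)" by simp
  then have "(1 + \<bar>x \<bullet> v + r\<bar>)^2 \<le> (1 + norm (x + r *\<^sub>R v))^2"
    by (intro power_mono) auto
  then have "B / (1 + norm (x + r *\<^sub>R v))^2 \<le> B / (1 + \<bar>x \<bullet> v + r\<bar>)^2"
    using assms(2) by (intro divide_left_mono) auto
  moreover have "B / (1 + \<bar>x \<bullet> v + r\<bar>)^2 = B * gg (x \<bullet> v + r)" by (simp add: gg_def)
  ultimately show ?thesis using assms(3)[of "x + r *\<^sub>R v"] by linarith
qed



definition phiB :: "('a::euclidean_space \<Rightarrow> complex) \<Rightarrow> real" where
  "phiB \<phi> = (SOME B. B \<ge> 0 \<and> (\<forall>x. norm (\<phi> x) \<le> B / (1 + norm x)^2))"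

lemma phiB:
  assumes "schwartz \<phi>" shows "phiB \<phi> \<ge> 0" "norm (\<phi> x) \<le> phiB \<phi> / (1 + norm x)^2"
proof -
  obtain B where "B \<ge> 0" "\<And>x. norm (\<phi> x) \<le> B / (1 + norm x)^2" using schwartz_bound[OF assms] by blast
  then have "\<exists>B. B \<ge> 0 \<and> (\<forall>x. norm (\<phi> x) \<le> B / (1 + norm x)^2)" by blast
  from someI_ex[OF this] show "phiB \<phi> \<ge> 0" "norm (\<phi> x) \<le> phiB \<phi> / (1 + norm x)^2"
    unfolding phiB_def by auto
qed

lemma phiB_le: assumes "schwartz \<phi>" shows "norm (\<phi> x) \<le> phiB \<phi>"
proof -
  have "(1 + norm x)^2 \<ge> 1" by (simp add: one_le_power)
  then have "phiB \<phi> / (1 + norm x)^2 \<le> phiB \<phi>"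
    using phiB(1)[OF assms] by (simp add: divide_le_eq mult_le_cancel_left1)
  then show ?thesis using phiB(2)[OF assms, of x] by linarith
qed

context
  fixes v :: "'a::euclidean_space" and \<phi> :: "'a \<Rightarrow> complex"
  assumes v1: "norm v = 1" and sch: "schwartz \<phi>"
begin

lemma phi_meas[measurable]: "\<phi> \<in> borel_measurable borel"
  by (rule borel_measurable_continuous_onI[OF schwartz_cont[OF sch]])

lemma lb: "norm (\<phi> (x + r *\<^sub>R v)) \<le> phiB \<phi> * gg (x \<bullet> v + r)"
  by (rule line_bound[OF v1 phiB(1)[OF sch] phiB(2)[OF sch]])

lemma line_integrable: "integrable lborel (\<lambda>r. \<phi> (x + r *\<^sub>R v))"
proof (rule Bochner_Integration.integrable_bound)
  show "integrable lborel (\<lambda>r. phiB \<phi> * gg (x \<bullet> v + r))"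
    using gg_shift_integrable by simp
  show "(\<lambda>r. \<phi> (x + r *\<^sub>R v)) \<in> borel_measurable lborel" by measurable
  show "AE r in lborel. norm (\<phi> (x + r *\<^sub>R v)) \<le> norm (phiB \<phi> * gg (x \<bullet> v + r))"
    using lb phiB(1)[OF sch] gg_nonneg by (auto intro: order_trans)
qed

definition "KK = phiB \<phi> * (\<integral>r. gg r \<partial>lborel)"

lemma KK_nonneg: "KK \<ge> 0"
  unfolding KK_def using phiB(1)[OF sch] gg_nonneg by (simp add: integral_nonneg_AE)

lemma line_norm_bound: "(\<integral>r. norm (indicator {0<..} r *\<^sub>R \<phi> (x + r *\<^sub>R v)) \<partial>lborel) \<le> KK"
proof -
  have "(\<integral>r. norm (indicator {0<..} r *\<^sub>R \<phi> (x + r *\<^sub>R v)) \<partial>lborel) \<le> (\<integral>r. phiB \<phi> * gg (x \<bullet> v + r) \<partial>lborel)"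
  proof (rule integral_mono_AE)
    show "integrable lborel (\<lambda>r. phiB \<phi> * gg (x \<bullet> v + r))"
      using gg_shift_integrable by simp
    show "integrable lborel (\<lambda>r. norm (indicator {0<..} r *\<^sub>R \<phi> (x + r *\<^sub>R v)))"
    proof (rule Bochner_Integration.integrable_bound)
      show "integrable lborel (\<lambda>r. phiB \<phi> * gg (x \<bullet> v + r))"
        using gg_shift_integrable by simp
      show "(\<lambda>r. norm (indicator {0<..} r *\<^sub>R \<phi> (x + r *\<^sub>R v))) \<in> borel_measurable lborel"
        by measurable
      show "AE r in lborel. norm (norm (indicator {0<..} r *\<^sub>R \<phi> (x + r *\<^sub>R v))) \<le> norm (phiB \<phi> * gg (x \<bullet> v + r))"
        using lb phiB(1)[OF sch] gg_nonneg by (auto intro: order_trans simp: indicator_def)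
    qed
    show "AE r in lborel. norm (indicator {0<..} r *\<^sub>R \<phi> (x + r *\<^sub>R v)) \<le> phiB \<phi> * gg (x \<bullet> v + r)"
      using lb phiB(1)[OF sch] gg_nonneg by (auto intro: order_trans simp: indicator_def)
  qed
  also have "\<dots> = KK" unfolding KK_def using gg_shift_integral by simp
  finally show ?thesis .
qed


lemma lborel_translate:
  fixes h :: "'b::euclidean_space \<Rightarrow> 'c::{banach,second_countable_topology}"
  assumes [measurable]: "h \<in> borel_measurable borel"
  shows "(\<integral>y. h y \<partial>lborel) = (\<integral>x. h (c + x) \<partial>lborel)"
proof -
  have "(\<integral>y. h y \<partial>lborel) = (\<integral>y. h y \<partial>distr lborel borel ((+) c))" by (simp add: lborel_distr_plus)
  also have "\<dots> = (\<integral>x. h (c + x) \<partial>lborel)" by (rule integral_distr) auto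
  finally show ?thesis .
qed

lemma lborel_translate_integrable:
  fixes h :: "'b::euclidean_space \<Rightarrow> 'c::{banach,second_countable_topology}"
  assumes [measurable]: "h \<in> borel_measurable borel" and "integrable lborel h"
  shows "integrable lborel (\<lambda>x. h (c + x))"
proof -
  have "integrable (distr lborel borel ((+) c)) h" using assms(2) by (simp add: lborel_distr_plus)
  then show ?thesis by (subst (asm) integrable_distr_eq) auto
qed

context
  fixes f :: "'a \<Rightarrow> complex"
  assumes fint: "integrable lborel f"
begin

lemma f_meas[measurable]: "f \<in> borel_measurable borel"
  by (metis borel_measurable_integrable fint measurable_cong_sets sets_lborel)

lemma G_meas[measurable]: "(\<lambda>(x,r). indicator {0<..} r *\<^sub>R (f x * \<phi> (x + r *\<^sub>R v))) \<in> borel_measurable (lborel \<Otimes>\<^sub>M lborel)"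
  by measurable

lemma G_int: "integrable (lborel \<Otimes>\<^sub>M lborel) (\<lambda>(x,r). indicator {0<..} r *\<^sub>R (f x * \<phi> (x + r *\<^sub>R v)))"
proof (rule lborel_pair.Fubini_integrable)
  show "(\<lambda>(x,r). indicator {0<..} r *\<^sub>R (f x * \<phi> (x + r *\<^sub>R v))) \<in> borel_measurable (lborel \<Otimes>\<^sub>M lborel)"
    by (rule G_meas)
  have eq: "(\<integral>r. norm (indicator {0<..} r *\<^sub>R (f x * \<phi> (x + r *\<^sub>R v))) \<partial>lborel)
      = norm (f x) * (\<integral>r. norm (indicator {0<..} r *\<^sub>R \<phi> (x + r *\<^sub>R v)) \<partial>lborel)" for x
  proof -
    have "\<And>r. norm (indicator {0<..} r *\<^sub>R (f x * \<phi> (x + r *\<^sub>R v))) = norm (f x) * norm (indicator {0<..} r *\<^sub>R \<phi> (x + r *\<^sub>R v))"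
      by (simp add: norm_mult)
    then have "(\<integral>r. norm (indicator {0<..} r *\<^sub>R (f x * \<phi> (x + r *\<^sub>R v))) \<partial>lborel)
      = (\<integral>r. norm (f x) * norm (indicator {0<..} r *\<^sub>R \<phi> (x + r *\<^sub>R v)) \<partial>lborel)"
      by (intro Bochner_Integration.integral_cong) auto
    also have "\<dots> = norm (f x) * (\<integral>r. norm (indicator {0<..} r *\<^sub>R \<phi> (x + r *\<^sub>R v)) \<partial>lborel)"
      by (rule integral_mult_right_zero)
    finally show ?thesis .
  qed
  show "integrable lborel (\<lambda>x. \<integral>r. norm ((\<lambda>(x,r). indicator {0<..} r *\<^sub>R (f x * \<phi> (x + r *\<^sub>R v))) (x, r)) \<partial>lborel)"
  proof (rule Bochner_Integration.integrable_bound)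
    show "integrable lborel (\<lambda>x. KK * norm (f x))" using fint by auto
    show "(\<lambda>x. \<integral>r. norm ((\<lambda>(x,r). indicator {0<..} r *\<^sub>R (f x * \<phi> (x + r *\<^sub>R v))) (x, r)) \<partial>lborel) \<in> borel_measurable lborel"
      by measurable
    show "AE x in lborel. norm (\<integral>r. norm ((\<lambda>(x,r). indicator {0<..} r *\<^sub>R (f x * \<phi> (x + r *\<^sub>R v))) (x, r)) \<partial>lborel) \<le> norm (KK * norm (f x))"
    proof (rule AE_I2)
      fix x
      have "0 \<le> (\<integral>r. norm (indicator {0<..} r *\<^sub>R \<phi> (x + r *\<^sub>R v)) \<partial>lborel)" by simp
      moreover have "norm (f x) * (\<integral>r. norm (indicator {0<..} r *\<^sub>R \<phi> (x + r *\<^sub>R v)) \<partial>lborel) \<le> norm (f x) * KK"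
        by (intro mult_left_mono line_norm_bound) simp
      ultimately show "norm (\<integral>r. norm ((\<lambda>(x,r). indicator {0<..} r *\<^sub>R (f x * \<phi> (x + r *\<^sub>R v))) (x, r)) \<partial>lborel) \<le> norm (KK * norm (f x))"
        unfolding prod.case eq using KK_nonneg by (simp add: abs_mult mult.commute)
    qed
  qed
  show "AE x in lborel. integrable lborel (\<lambda>r. (\<lambda>(x,r). indicator {0<..} r *\<^sub>R (f x * \<phi> (x + r *\<^sub>R v))) (x, r))"
    by (intro AE_I2) (auto intro!: integrable_mult_indicator line_integrable)
qed

lemma H_meas[measurable]: "(\<lambda>(r,y). indicator {0<..} r *\<^sub>R (f (y - r *\<^sub>R v) * \<phi> y)) \<in> borel_measurable (lborel \<Otimes>\<^sub>M lborel)"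
  by measurable

lemma GH_translate: "(\<integral>x. indicator {0<..} r *\<^sub>R (f x * \<phi> (x + r *\<^sub>R v)) \<partial>lborel)
   = (\<integral>y. indicator {0<..} r *\<^sub>R (f (y - r *\<^sub>R v) * \<phi> y) \<partial>lborel)"
proof -
  have e: "(\<lambda>x. indicator {0<..} r *\<^sub>R (f (r *\<^sub>R v + x - r *\<^sub>R v) * \<phi> (r *\<^sub>R v + x)))
     = (\<lambda>x. indicator {0<..} r *\<^sub>R (f x * \<phi> (x + r *\<^sub>R v)))"
    by (simp add: fun_eq_iff add.commute)
  have "(\<integral>y. indicator {0<..} r *\<^sub>R (f (y - r *\<^sub>R v) * \<phi> y) \<partial>lborel)
     = (\<integral>x. indicator {0<..} r *\<^sub>R (f (r *\<^sub>R v + x - r *\<^sub>R v) * \<phi> (r *\<^sub>R v + x)) \<partial>lborel)"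
    by (rule lborel_translate) measurable
  then show ?thesis unfolding e by (rule sym)
qed

lemma GH_translate_norm: "(\<integral>x. norm (indicator {0<..} r *\<^sub>R (f x * \<phi> (x + r *\<^sub>R v))) \<partial>lborel)
   = (\<integral>y. norm (indicator {0<..} r *\<^sub>R (f (y - r *\<^sub>R v) * \<phi> y)) \<partial>lborel)"
proof -
  have e: "(\<lambda>x. norm (indicator {0<..} r *\<^sub>R (f (r *\<^sub>R v + x - r *\<^sub>R v) * \<phi> (r *\<^sub>R v + x))))
     = (\<lambda>x. norm (indicator {0<..} r *\<^sub>R (f x * \<phi> (x + r *\<^sub>R v))))"
    by (simp add: fun_eq_iff add.commute)
  have "(\<integral>y. norm (indicator {0<..} r *\<^sub>R (f (y - r *\<^sub>R v) * \<phi> y)) \<partial>lborel)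
     = (\<integral>x. norm (indicator {0<..} r *\<^sub>R (f (r *\<^sub>R v + x - r *\<^sub>R v) * \<phi> (r *\<^sub>R v + x))) \<partial>lborel)"
    by (rule lborel_translate) measurable
  then show ?thesis unfolding e by (rule sym)
qed

lemma H_int: "integrable (lborel \<Otimes>\<^sub>M lborel) (\<lambda>(r,y). indicator {0<..} r *\<^sub>R (f (y - r *\<^sub>R v) * \<phi> y))"
proof (rule lborel_pair.Fubini_integrable)
  show "(\<lambda>(r,y). indicator {0<..} r *\<^sub>R (f (y - r *\<^sub>R v) * \<phi> y)) \<in> borel_measurable (lborel \<Otimes>\<^sub>M lborel)"
    by (rule H_meas)
  have gn: "integrable (lborel \<Otimes>\<^sub>M lborel) (case_prod (\<lambda>x r. norm (indicator {0<..} r *\<^sub>R (f x * \<phi> (x + r *\<^sub>R v)))))"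
  proof -
    have "integrable (lborel \<Otimes>\<^sub>M lborel) (\<lambda>p. norm ((\<lambda>(x,r). indicator {0<..} r *\<^sub>R (f x * \<phi> (x + r *\<^sub>R v))) p))"
      by (rule integrable_norm[OF G_int])
    moreover have "(\<lambda>p. norm ((\<lambda>(x,r). indicator {0<..} r *\<^sub>R (f x * \<phi> (x + r *\<^sub>R v))) p))
       = case_prod (\<lambda>x r. norm (indicator {0<..} r *\<^sub>R (f x * \<phi> (x + r *\<^sub>R v))))"
      by (simp add: fun_eq_iff split_beta)
    ultimately show ?thesis by simp
  qed
  show "integrable lborel (\<lambda>r. \<integral>y. norm ((\<lambda>(r,y). indicator {0<..} r *\<^sub>R (f (y - r *\<^sub>R v) * \<phi> y)) (r, y)) \<partial>lborel)"
    using lborel_pair.integrable_snd[OF gn] by (simp only: GH_translate_norm prod.case)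
  show "AE r in lborel. integrable lborel (\<lambda>y. (\<lambda>(r,y). indicator {0<..} r *\<^sub>R (f (y - r *\<^sub>R v) * \<phi> y)) (r, y))"
  proof (rule AE_I2)
    fix r :: real
    have fi: "integrable lborel (\<lambda>y. f (- (r *\<^sub>R v) + y))"
      by (rule lborel_translate_integrable[OF f_meas fint])
    show "integrable lborel (\<lambda>y. (\<lambda>(r,y). indicator {0<..} r *\<^sub>R (f (y - r *\<^sub>R v) * \<phi> y)) (r, y))"
    proof (rule Bochner_Integration.integrable_bound)
      show "integrable lborel (\<lambda>y. phiB \<phi> * norm (f (- (r *\<^sub>R v) + y)))" using fi by auto
      show "(\<lambda>y. (\<lambda>(r,y). indicator {0<..} r *\<^sub>R (f (y - r *\<^sub>R v) * \<phi> y)) (r, y)) \<in> borel_measurable lborel"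
        by measurable
      show "AE y in lborel. norm ((\<lambda>(r,y). indicator {0<..} r *\<^sub>R (f (y - r *\<^sub>R v) * \<phi> y)) (r, y)) \<le> norm (phiB \<phi> * norm (f (- (r *\<^sub>R v) + y)))"
      proof (rule AE_I2)
        fix y
        have "norm (f (y - r *\<^sub>R v) * \<phi> y) \<le> norm (f (y - r *\<^sub>R v)) * phiB \<phi>"
          unfolding norm_mult by (intro mult_left_mono phiB_le[OF sch]) simp
        then show "norm ((\<lambda>(r,y). indicator {0<..} r *\<^sub>R (f (y - r *\<^sub>R v) * \<phi> y)) (r, y)) \<le> norm (phiB \<phi> * norm (f (- (r *\<^sub>R v) + y)))"
          using phiB(1)[OF sch] by (auto simp: indicator_def abs_mult mult.commute)
      qed
    qed
  qed
qed

lemma fubini_chain: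
  "(\<integral>x. (\<integral>r. indicator {0<..} r *\<^sub>R (f x * \<phi> (x + r *\<^sub>R v)) \<partial>lborel) \<partial>lborel)
   = (\<integral>y. (\<integral>r. indicator {0<..} r *\<^sub>R f (y - r *\<^sub>R v) \<partial>lborel) * \<phi> y \<partial>lborel)"
proof -
  have "(\<integral>x. (\<integral>r. indicator {0<..} r *\<^sub>R (f x * \<phi> (x + r *\<^sub>R v)) \<partial>lborel) \<partial>lborel)
     = (\<integral>r. (\<integral>x. indicator {0<..} r *\<^sub>R (f x * \<phi> (x + r *\<^sub>R v)) \<partial>lborel) \<partial>lborel)"
    using lborel_pair.Fubini_integral[of "\<lambda>x r. indicator {0<..} r *\<^sub>R (f x * \<phi> (x + r *\<^sub>R v))"] G_int
    by simp
  also have "\<dots> = (\<integral>r. (\<integral>y. indicator {0<..} r *\<^sub>R (f (y - r *\<^sub>R v) * \<phi> y) \<partial>lborel) \<partial>lborel)"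
    by (rule Bochner_Integration.integral_cong[OF refl], rule GH_translate)
  also have "\<dots> = (\<integral>y. (\<integral>r. indicator {0<..} r *\<^sub>R (f (y - r *\<^sub>R v) * \<phi> y) \<partial>lborel) \<partial>lborel)"
    using lborel_pair.Fubini_integral[of "\<lambda>r y. indicator {0<..} r *\<^sub>R (f (y - r *\<^sub>R v) * \<phi> y)"] H_int
    by simp
  also have "\<dots> = (\<integral>y. (\<integral>r. indicator {0<..} r *\<^sub>R f (y - r *\<^sub>R v) \<partial>lborel) * \<phi> y \<partial>lborel)"
  proof (rule Bochner_Integration.integral_cong[OF refl])
    fix y
    have "\<And>r. indicator {0<..} r *\<^sub>R (f (y - r *\<^sub>R v) * \<phi> y) = (indicator {0<..} r *\<^sub>R f (y - r *\<^sub>R v)) * \<phi> y"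
      by (simp add: scaleR_conv_of_real)
    then have "(\<integral>r. indicator {0<..} r *\<^sub>R (f (y - r *\<^sub>R v) * \<phi> y) \<partial>lborel) = (\<integral>r. (indicator {0<..} r *\<^sub>R f (y - r *\<^sub>R v)) * \<phi> y \<partial>lborel)"
      by (intro Bochner_Integration.integral_cong) auto
    also have "\<dots> = (\<integral>r. indicator {0<..} r *\<^sub>R f (y - r *\<^sub>R v) \<partial>lborel) * \<phi> y"
      by (rule integral_mult_left_zero)
    finally show "(\<integral>r. indicator {0<..} r *\<^sub>R (f (y - r *\<^sub>R v) * \<phi> y) \<partial>lborel) = (\<integral>r. indicator {0<..} r *\<^sub>R f (y - r *\<^sub>R v) \<partial>lborel) * \<phi> y" .
  qed
  finally show ?thesis .
qed

end
end


lemma ae_supp: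
  fixes f :: "'a::euclidean_space \<Rightarrow> complex"
  shows "AE x in lborel. f x \<noteq> 0 \<longrightarrow> tmin v f \<le> ereal (x \<bullet> v)"
proof -
  let ?F = "{U. open U \<and> (AE x in lborel. x \<in> U \<longrightarrow> f x = 0)}"
  obtain F' where F': "F' \<subseteq> ?F" "countable F'" "\<Union>F' = \<Union>?F"
    using Lindelof[of ?F] by auto
  have "\<forall>U\<in>F'. AE x in lborel. x \<in> U \<longrightarrow> f x = 0" using F'(1) by auto
  then have "AE x in lborel. \<forall>U\<in>F'. x \<in> U \<longrightarrow> f x = 0"
    by (subst AE_ball_countable[OF F'(2)]) simp
  then show ?thesis
  proof eventually_elim
    case (elim x)
    show ?case
    proof
      assume "f x \<noteq> 0"
      with elim have "x \<notin> \<Union>F'" by auto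
      then have "x \<in> esssupp f" unfolding esssupp_def using F'(3) by auto
      then show "tmin v f \<le> ereal (x \<bullet> v)" unfolding tmin_def by (rule INF_lower)
    qed
  qed
qed

lemma pw_F:
  fixes f :: "'a::euclidean_space \<Rightarrow> complex"
  assumes [measurable]: "f \<in> borel_measurable borel"
  shows "pointwise_antideriv v f y = (\<integral>r. indicator {0<..} r *\<^sub>R f (y - r *\<^sub>R v) \<partial>lborel)"
proof -
  let ?a = "y \<bullet> v"
  have "pointwise_antideriv v f y = (\<integral>t. indicator {..?a} t *\<^sub>R f (perp_part v y + t *\<^sub>R v) \<partial>lborel)"
    unfolding pointwise_antideriv_def set_lebesgue_integral_def by simp
  also have "\<dots> = \<bar>-1\<bar> *\<^sub>R (\<integral>r. indicator {..?a} (?a + (-1) * r) *\<^sub>R f (perp_part v y + (?a + (-1) * r) *\<^sub>R v) \<partial>lborel)"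
    by (rule lborel_integral_real_affine) simp
  also have "\<dots> = (\<integral>r. indicator {0..} r *\<^sub>R f (y - r *\<^sub>R v) \<partial>lborel)"
  proof -
    have "\<And>r. indicator {..?a} (?a + (-1) * r) *\<^sub>R f (perp_part v y + (?a + (-1) * r) *\<^sub>R v)
        = (indicator {0..} r :: real) *\<^sub>R f (y - r *\<^sub>R v)"
      by (simp add: perp_part_def indicator_def algebra_simps)
    then show ?thesis by simp
  qed
  also have "\<dots> = (\<integral>r. indicator {0<..} r *\<^sub>R f (y - r *\<^sub>R v) \<partial>lborel)"
  proof (rule integral_cong_AE)
    show "AE r in lborel. indicator {0..} r *\<^sub>R f (y - r *\<^sub>R v) = indicator {0<..} r *\<^sub>R f (y - r *\<^sub>R v)"
      using AE_lborel_singleton[of "0::real"] by eventually_elim (auto simp: indicator_def)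
  qed measurable
  finally show ?thesis .
qed

lemma cutoff_facts:
  assumes "admissible_cutoff v f \<psi>0"
  shows "continuous_on UNIV \<psi>0" "integrable lborel \<psi>0" "(\<integral>s. \<psi>0 s \<partial>lborel) = 1"
    "\<And>s. tmin v f \<le> ereal s \<Longrightarrow> \<psi>0 s = 0"
proof -
  have "\<And>x. \<psi>0 differentiable (at x)"
    using assms unfolding admissible_cutoff_def smooth_fun_def by (metis dirderivs.simps(1))
  then show "continuous_on UNIV \<psi>0" by (meson continuous_at_imp_continuous_on differentiable_imp_continuous_within)
  show i1: "(\<integral>s. \<psi>0 s \<partial>lborel) = 1" using assms unfolding admissible_cutoff_def by simp
  show "integrable lborel \<psi>0"
  proof (rule ccontr)
    assume "\<not> integrable lborel \<psi>0"
    then have "(\<integral>s. \<psi>0 s \<partial>lborel) = 0" by (rule not_integrable_integral_eq)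
    with i1 show False by simp
  qed
  fix s assume s: "tmin v f \<le> ereal s"
  have "closure {s. \<psi>0 s \<noteq> 0} \<subseteq> {s. ereal s < tmin v f}"
    using assms unfolding admissible_cutoff_def by simp
  moreover have "s \<notin> {s. ereal s < tmin v f}" using s by (simp add: not_less)
  ultimately have "s \<notin> closure {s. \<psi>0 s \<noteq> 0}" by blast
  then have "s \<notin> {s. \<psi>0 s \<noteq> 0}" using closure_subset[of "{s. \<psi>0 s \<noteq> 0}"] by blast
  then show "\<psi>0 s = 0" by simp
qed

context
  fixes v :: "'a::euclidean_space" and \<phi> :: "'a \<Rightarrow> complex" and f :: "'a \<Rightarrow> complex" and \<psi>0 :: "real \<Rightarrow> complex"
  assumes v1: "norm v = 1" and sch: "schwartz \<phi>" and adm: "admissible_cutoff v f \<psi>0"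
begin

lemma psi_meas[measurable]: "\<psi>0 \<in> borel_measurable borel"
  by (rule borel_measurable_continuous_onI[OF cutoff_facts(1)[OF adm]])

lemma phi_meas'[measurable]: "\<phi> \<in> borel_measurable borel"
  by (rule phi_meas[OF v1 sch])

lemma X_meas[measurable]: "(\<lambda>x. \<integral>s. \<phi> (x - (x \<bullet> v) *\<^sub>R v + s *\<^sub>R v) \<partial>lborel) \<in> borel_measurable borel"
proof (rule lborel.borel_measurable_lebesgue_integral)
  show "(\<lambda>(x, s). \<phi> (x - (x \<bullet> v) *\<^sub>R v + s *\<^sub>R v)) \<in> borel_measurable (borel \<Otimes>\<^sub>M lborel)"
    by measurable
qed

lemma ind_pred[measurable]: "Measurable.pred (borel \<Otimes>\<^sub>M borel) (\<lambda>x. snd x \<in> {..fst x \<bullet> (v::'a)})"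
proof -
  have "Measurable.pred (borel \<Otimes>\<^sub>M borel) (\<lambda>x::'a\<times>real. snd x \<le> fst x \<bullet> v)" by measurable
  then show ?thesis by simp
qed

lemma A_meas: "antideriv_test v \<psi>0 \<phi> \<in> borel_measurable borel"
  unfolding antideriv_test_def set_lebesgue_integral_def xray_def perp_part_def
  by measurable

lemma A_point:
  assumes tx: "tmin v f \<le> ereal (x \<bullet> v)"
  shows "antideriv_test v \<psi>0 \<phi> x = - (\<integral>r. indicator {0<..} r *\<^sub>R \<phi> (x + r *\<^sub>R v) \<partial>lborel)"
proof -
  define t where "t = x \<bullet> v"
  define u where "u = perp_part v x"
  define X where "X = xray v \<phi> u"
  have li: "integrable lborel (\<lambda>s. \<phi> (u + s *\<^sub>R v))" by (rule line_integrable[OF v1 sch])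
  have psi_int: "integrable lborel \<psi>0" by (rule cutoff_facts(2)[OF adm])
  have psi0: "\<psi>0 s = 0" if "s \<ge> t" for s
    using cutoff_facts(4)[OF adm] tx that unfolding t_def by (meson ereal_less_eq(3) order_trans)
  have "antideriv_test v \<psi>0 \<phi> x = (\<integral>s. indicator {..t} s *\<^sub>R (\<phi> (u + s *\<^sub>R v) - X * \<psi>0 s) \<partial>lborel)"
    unfolding antideriv_test_def set_lebesgue_integral_def t_def u_def X_def by simp
  also have "\<dots> = (\<integral>s. indicator {..t} s *\<^sub>R \<phi> (u + s *\<^sub>R v) - X * \<psi>0 s \<partial>lborel)"
  proof (intro Bochner_Integration.integral_cong refl)
    fix s
    show "indicator {..t} s *\<^sub>R (\<phi> (u + s *\<^sub>R v) - X * \<psi>0 s) = indicator {..t} s *\<^sub>R \<phi> (u + s *\<^sub>R v) - X * \<psi>0 s"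
      using psi0[of s] by (cases "s \<le> t") (auto simp: indicator_def)
  qed
  also have "\<dots> = (\<integral>s. indicator {..t} s *\<^sub>R \<phi> (u + s *\<^sub>R v) \<partial>lborel) - (\<integral>s. X * \<psi>0 s \<partial>lborel)"
    by (rule Bochner_Integration.integral_diff) (auto intro!: integrable_mult_indicator li psi_int)
  also have "(\<integral>s. X * \<psi>0 s \<partial>lborel) = X"
    using cutoff_facts(3)[OF adm] by simp
  also have "X = (\<integral>s. indicator {..t} s *\<^sub>R \<phi> (u + s *\<^sub>R v) + indicator {t<..} s *\<^sub>R \<phi> (u + s *\<^sub>R v) \<partial>lborel)"
    unfolding X_def xray_def
    by (intro Bochner_Integration.integral_cong refl) (auto simp: indicator_def)
  also have "\<dots> = (\<integral>s. indicator {..t} s *\<^sub>R \<phi> (u + s *\<^sub>R v) \<partial>lborel) + (\<integral>s. indicator {t<..} s *\<^sub>R \<phi> (u + s *\<^sub>R v) \<partial>lborel)"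
    by (rule Bochner_Integration.integral_add) (auto intro!: integrable_mult_indicator li)
  finally have 1: "antideriv_test v \<psi>0 \<phi> x = - (\<integral>s. indicator {t<..} s *\<^sub>R \<phi> (u + s *\<^sub>R v) \<partial>lborel)"
    by simp
  have "(\<integral>s. indicator {t<..} s *\<^sub>R \<phi> (u + s *\<^sub>R v) \<partial>lborel)
      = \<bar>1\<bar> *\<^sub>R (\<integral>r. indicator {t<..} (t + 1 * r) *\<^sub>R \<phi> (u + (t + 1 * r) *\<^sub>R v) \<partial>lborel)"
    by (rule lborel_integral_real_affine) simp
  also have "\<dots> = (\<integral>r. indicator {0<..} r *\<^sub>R \<phi> (x + r *\<^sub>R v) \<partial>lborel)"
  proof -
    have "\<And>r. indicator {t<..} (t + 1 * r) *\<^sub>R \<phi> (u + (t + 1 * r) *\<^sub>R v) = (indicator {0<..} r :: real) *\<^sub>R \<phi> (x + r *\<^sub>R v)"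
      by (simp add: u_def t_def perp_part_def indicator_def algebra_simps)
    then show ?thesis by simp
  qed
  finally show ?thesis using 1 by simp
qed

end

theorem proposition1p3:
  fixes v :: "'a::euclidean_space" and f :: "'a \<Rightarrow> complex"
  assumes "norm v = 1"
    and "integrable lborel f"
    and "tmin v f > -\<infinity>"
    and "admissible_cutoff v f \<psi>0"
    and "schwartz \<phi>"
  shows "dist_antideriv v \<psi>0 (fun_pairing f) \<phi>
           = (LINT x|lborel. pointwise_antideriv v f x * \<phi> x)"
proof -
  note v1 = assms(1) and fint = assms(2) and adm = assms(4) and sch = assms(5)
  have fm[measurable]: "f \<in> borel_measurable borel" by (rule f_meas[OF v1 sch fint])
  have pm[measurable]: "\<phi> \<in> borel_measurable borel" by (rule phi_meas[OF v1 sch])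
  have Am[measurable]: "antideriv_test v \<psi>0 \<phi> \<in> borel_measurable borel" by (rule A_meas[OF v1 sch adm])
  have "dist_antideriv v \<psi>0 (fun_pairing f) \<phi> = (\<integral>x. - (f x * antideriv_test v \<psi>0 \<phi> x) \<partial>lborel)"
    unfolding dist_antideriv_def fun_pairing_def by simp
  also have "\<dots> = (\<integral>x. (\<integral>r. indicator {0<..} r *\<^sub>R (f x * \<phi> (x + r *\<^sub>R v)) \<partial>lborel) \<partial>lborel)"
  proof (rule integral_cong_AE)
    show "(\<lambda>x. - (f x * antideriv_test v \<psi>0 \<phi> x)) \<in> borel_measurable lborel" by measurable
    show "(\<lambda>x. \<integral>r. indicator {0<..} r *\<^sub>R (f x * \<phi> (x + r *\<^sub>R v)) \<partial>lborel) \<in> borel_measurable lborel"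
      by measurable
    show "AE x in lborel. - (f x * antideriv_test v \<psi>0 \<phi> x) = (\<integral>r. indicator {0<..} r *\<^sub>R (f x * \<phi> (x + r *\<^sub>R v)) \<partial>lborel)"
      using ae_supp[of f v]
    proof eventually_elim
      case (elim x)
      show ?case
      proof (cases "f x = 0")
        case True then show ?thesis by simp
      next
        case False
        then have "antideriv_test v \<psi>0 \<phi> x = - (\<integral>r. indicator {0<..} r *\<^sub>R \<phi> (x + r *\<^sub>R v) \<partial>lborel)"
          using elim by (intro A_point[OF v1 sch adm]) auto
        moreover have "(\<integral>r. indicator {0<..} r *\<^sub>R (f x * \<phi> (x + r *\<^sub>R v)) \<partial>lborel)
            = (\<integral>r. f x * (indicator {0<..} r *\<^sub>R \<phi> (x + r *\<^sub>R v)) \<partial>lborel)"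
          by (intro Bochner_Integration.integral_cong refl) (simp add: scaleR_conv_of_real)
        moreover have "\<dots> = f x * (\<integral>r. indicator {0<..} r *\<^sub>R \<phi> (x + r *\<^sub>R v) \<partial>lborel)"
          by (rule integral_mult_right_zero)
        ultimately show ?thesis by simp
      qed
    qed
  qed
  also have "\<dots> = (\<integral>y. (\<integral>r. indicator {0<..} r *\<^sub>R f (y - r *\<^sub>R v) \<partial>lborel) * \<phi> y \<partial>lborel)"
    by (rule fubini_chain[OF v1 sch fint])
  also have "\<dots> = (\<integral>y. pointwise_antideriv v f y * \<phi> y \<partial>lborel)"
    by (intro Bochner_Integration.integral_cong refl) (simp add: pw_F[OF fm])
  finally show ?thesis .
qed

end
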